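(* Let $\mathcal X,\mathcal Y$ be finite sets, let $B_1,\dots,B_r$ be $\mathcal X\times\mathcal Y$ blocky matrices, and let $\Gamma:\{0,1\}^r\to\{0,1\}$ be any function. Then the Boolean matrix $F$ defined by $F(x,y)=\Gamma(B_1(x,y),\dots,B_r(x,y))$ for $(x,y)\in\mathcal X\times\mathcal Y$ satisfies $\|F\|_{\gamma_2}\le 3^r$.
   Context: A Boolean matrix $F\in\{0,1\}^{\mathcal X\times\mathcal Y}$ is called blocky if there exist pairwise disjoint sets $\mathcal X_i\subseteq\mathcal X$ and pairwise disjoint sets $\mathcal Y_i\subseteq\mathcal Y$ such that the support $\{(x,y):F(x,y)=1\}$ of $F$ equals $\bigcup_i \mathcal X_i\times\mathcal Y_i$. For a real $\mathcal X\times\mathcal Y$ matrix $A$, the $\gamma_2$-factorization norm $\|A\|_{\gamma_2}$ is the infimum of all $c$ such that there exist a positive integer $d$ and vectors $u_x,v_y\in\mathbb{R}^d$ with $\langle u_x,v_y\rangle=A(x,y)$ and $\|u_x\|_2\|v_y\|_2\le c$ for all $x\in\mathcal X,y\in\mathcal Y$. *)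

theory Defs
  imports "HOL-Analysis.Analysis"
begin

text \<open>Matrices indexed by X \<times> Y are functions 'a \<Rightarrow> 'b \<Rightarrow> real, considered on X \<times> Y only.\<close>

definition boolean_matrix :: "'a set \<Rightarrow> 'b set \<Rightarrow> ('a \<Rightarrow> 'b \<Rightarrow> real) \<Rightarrow> bool" where
  "boolean_matrix X Y F \<longleftrightarrow> (\<forall>x\<in>X. \<forall>y\<in>Y. F x y = 0 \<or> F x y = 1)"

definition blocky :: "'a set \<Rightarrow> 'b set \<Rightarrow> ('a \<Rightarrow> 'b \<Rightarrow> real) \<Rightarrow> bool" where
  "blocky X Y F \<longleftrightarrow> boolean_matrix X Y F \<and>
     (\<exists>(I :: nat set) (Xs :: nat \<Rightarrow> 'a set) (Ys :: nat \<Rightarrow> 'b set).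
        (\<forall>i\<in>I. Xs i \<subseteq> X \<and> Ys i \<subseteq> Y) \<and>
        (\<forall>i\<in>I. \<forall>j\<in>I. i \<noteq> j \<longrightarrow> Xs i \<inter> Xs j = {} \<and> Ys i \<inter> Ys j = {}) \<and>
        {(x, y). x \<in> X \<and> y \<in> Y \<and> F x y = 1} = (\<Union>i\<in>I. Xs i \<times> Ys i))"

text \<open>gamma_2 factorization norm: vectors in R^d represented as nat \<Rightarrow> real on {..<d}.\<close>
definition gamma2 :: "'a set \<Rightarrow> 'b set \<Rightarrow> ('a \<Rightarrow> 'b \<Rightarrow> real) \<Rightarrow> real" where
  "gamma2 X Y A = Inf {c. 0 \<le> c \<and> (\<exists>(d::nat) (u :: 'a \<Rightarrow> nat \<Rightarrow> real) (v :: 'b \<Rightarrow> nat \<Rightarrow> real).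
       d \<ge> 1 \<and>
       (\<forall>x\<in>X. \<forall>y\<in>Y. (\<Sum>k<d. u x k * v y k) = A x y \<and>
          sqrt (\<Sum>k<d. (u x k)\<^sup>2) * sqrt (\<Sum>k<d. (v y k)\<^sup>2) \<le> c))}"

end

theory Submission imports Defs "HOL-Library.FuncSet" begin

lemma gamma2_le:
  fixes K :: "'k set" and u :: "'a \<Rightarrow> 'k \<Rightarrow> real" and v :: "'b \<Rightarrow> 'k \<Rightarrow> real"
  assumes K: "finite K" and c: "0 \<le> c"
    and H: "\<And>x y. x \<in> X \<Longrightarrow> y \<in> Y \<Longrightarrow> (\<Sum>k\<in>K. u x k * v y k) = A x y \<and>
          sqrt (\<Sum>k\<in>K. (u x k)\<^sup>2) * sqrt (\<Sum>k\<in>K. (v y k)\<^sup>2) \<le> c"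
  shows "gamma2 X Y A \<le> c"
proof -
  obtain h where h: "bij_betw h {0..<card K} K" using ex_bij_betw_nat_finite[OF K] by blast
  define n where "n = card K"
  define u' where "u' x k = (if k < n then u x (h k) else 0)" for x k
  define v' where "v' y k = (if k < n then v y (h k) else 0)" for y k
  have ri: "(\<Sum>k<Suc n. g k (if k < n then p (h k) else 0) (if k < n then q (h k) else 0)) = (\<Sum>k\<in>K. g 0 (p k) (q k))"
    if g0: "\<And>a. g n 0 0 = 0" and gk: "\<And>k a b. g k a b = g 0 a b" for g :: "nat \<Rightarrow> real \<Rightarrow> real \<Rightarrow> real" and p q
  proof -
    have "(\<Sum>k<Suc n. g k (if k < n then p (h k) else 0) (if k < n then q (h k) else 0)) = (\<Sum>k<n. g 0 (p (h k)) (q (h k)))"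
      using g0 by (simp add: lessThan_Suc, intro sum.cong refl gk)
    also have "\<dots> = (\<Sum>k\<in>K. g 0 (p k) (q k))"
      using sum.reindex_bij_betw[OF h, of "\<lambda>k. g 0 (p k) (q k)"] by (simp add: n_def atLeast0LessThan)
    finally show ?thesis .
  qed
  have "c \<in> {c. 0 \<le> c \<and> (\<exists>(d::nat) (u :: 'a \<Rightarrow> nat \<Rightarrow> real) (v :: 'b \<Rightarrow> nat \<Rightarrow> real).
       d \<ge> 1 \<and>
       (\<forall>x\<in>X. \<forall>y\<in>Y. (\<Sum>k<d. u x k * v y k) = A x y \<and>
          sqrt (\<Sum>k<d. (u x k)\<^sup>2) * sqrt (\<Sum>k<d. (v y k)\<^sup>2) \<le> c))}"
  proof (intro CollectI conjI c exI ballI)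
    show "1 \<le> Suc n" by simp
    fix x y assume xy: "x \<in> X" "y \<in> Y"
    have e1: "(\<Sum>k<Suc n. u' x k * v' y k) = (\<Sum>k\<in>K. u x k * v y k)"
      unfolding u'_def v'_def using ri[of "\<lambda>k a b. a * b" "u x" "v y"] by simp
    have e2: "(\<Sum>k<Suc n. (u' x k)\<^sup>2) = (\<Sum>k\<in>K. (u x k)\<^sup>2)"
      unfolding u'_def using ri[of "\<lambda>k a b. a\<^sup>2" "u x" "u x"] by simp
    have e3: "(\<Sum>k<Suc n. (v' y k)\<^sup>2) = (\<Sum>k\<in>K. (v y k)\<^sup>2)"
      unfolding v'_def using ri[of "\<lambda>k a b. a\<^sup>2" "v y" "v y"] by simp
    show "(\<Sum>k<Suc n. u' x k * v' y k) = A x y" using e1 H[OF xy] by simp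
    show "sqrt (\<Sum>k<Suc n. (u' x k)\<^sup>2) * sqrt (\<Sum>k<Suc n. (v' y k)\<^sup>2) \<le> c"
      using e2 e3 H[OF xy] by simp
  qed
  then show ?thesis unfolding gamma2_def
    by (rule cInf_lower) (auto intro!: bdd_belowI[where m=0])
qed
lemma sum_TW:
  fixes \<gamma> :: "(nat \<Rightarrow> bool) \<Rightarrow> real" and ch :: "nat \<Rightarrow> bool \<Rightarrow> 'k \<Rightarrow> real"
  assumes K: "\<And>i. i < r \<Longrightarrow> finite (K i)"
  shows "(\<Sum>p\<in>(PiE {..<r} (\<lambda>_. UNIV)) \<times> (PiE {..<r} K). \<gamma> (fst p) * (\<Prod>i<r. ch i (fst p i) (snd p i)))
       = (\<Sum>S\<in>PiE {..<r} (\<lambda>_. UNIV). \<gamma> S * (\<Prod>i<r. \<Sum>k\<in>K i. ch i (S i) k))"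
proof -
  have "(\<Sum>p\<in>(PiE {..<r} (\<lambda>_. UNIV)) \<times> (PiE {..<r} K). \<gamma> (fst p) * (\<Prod>i<r. ch i (fst p i) (snd p i)))
     = (\<Sum>S\<in>PiE {..<r} (\<lambda>_. UNIV). \<Sum>w\<in>PiE {..<r} K. \<gamma> S * (\<Prod>i<r. ch i (S i) (w i)))"
    by (simp add: sum.cartesian_product split_def)
  also have "\<dots> = (\<Sum>S\<in>PiE {..<r} (\<lambda>_. UNIV). \<gamma> S * (\<Prod>i<r. \<Sum>k\<in>K i. ch i (S i) k))"
  proof (rule sum.cong[OF refl])
    fix S :: "nat \<Rightarrow> bool"
    have "(\<Prod>i<r. \<Sum>k\<in>K i. ch i (S i) k) = (\<Sum>w\<in>PiE {..<r} K. \<Prod>i<r. ch i (S i) (w i))"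
      using prod_sum_PiE[of "{..<r}" K "\<lambda>i k. ch i (S i) k"] K by simp
    then show "(\<Sum>w\<in>PiE {..<r} K. \<gamma> S * (\<Prod>i<r. ch i (S i) (w i))) = \<gamma> S * (\<Prod>i<r. \<Sum>k\<in>K i. ch i (S i) k)"
      by (simp add: sum_distrib_left)
  qed
  finally show ?thesis .
qed

lemma sum_T3: "(\<Sum>S\<in>PiE {..<r} (\<lambda>_. UNIV). (\<Prod>i<r. if S i then 1 else 2::real)) = 3 ^ r"
proof -
  have "(\<Sum>S\<in>PiE {..<r} (\<lambda>_. UNIV). (\<Prod>i<r. if S i then 1 else 2::real))
      = (\<Prod>i<r. \<Sum>s\<in>UNIV. if s then 1 else 2::real)"
    using prod_sum_PiE[of "{..<r}" "\<lambda>_. UNIV" "\<lambda>i s. if s then 1 else 2::real"] by simp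
  also have "\<dots> = 3 ^ r" by (simp add: UNIV_bool)
  finally show ?thesis .
qed

lemma norm_bound:
  fixes \<gamma> :: "(nat \<Rightarrow> bool) \<Rightarrow> real" and \<phi> :: "nat \<Rightarrow> bool \<Rightarrow> 'k \<Rightarrow> real"
  assumes K: "\<And>i. i < r \<Longrightarrow> finite (K i)"
    and g: "\<And>S. \<bar>\<gamma> S\<bar> \<le> 1"
    and ph: "\<And>i s. i < r \<Longrightarrow> (\<Sum>k\<in>K i. (\<phi> i s k)\<^sup>2) \<le> (if s then 1 else 2)"
  shows "(\<Sum>p\<in>(PiE {..<r} (\<lambda>_. UNIV)) \<times> (PiE {..<r} K). (\<gamma> (fst p) * (\<Prod>i<r. \<phi> i (fst p i) (snd p i)))\<^sup>2) \<le> 3 ^ r"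
proof -
  have "(\<Sum>p\<in>(PiE {..<r} (\<lambda>_. UNIV)) \<times> (PiE {..<r} K). (\<gamma> (fst p) * (\<Prod>i<r. \<phi> i (fst p i) (snd p i)))\<^sup>2)
     = (\<Sum>p\<in>(PiE {..<r} (\<lambda>_. UNIV)) \<times> (PiE {..<r} K). (\<gamma> (fst p))\<^sup>2 * (\<Prod>i<r. (\<lambda>i s k. (\<phi> i s k)\<^sup>2) i (fst p i) (snd p i)))"
    by (simp add: power_mult_distrib prod_power_distrib)
  also have "\<dots> = (\<Sum>S\<in>PiE {..<r} (\<lambda>_. UNIV). (\<gamma> S)\<^sup>2 * (\<Prod>i<r. \<Sum>k\<in>K i. (\<phi> i (S i) k)\<^sup>2))"
    by (rule sum_TW[OF K])
  also have "\<dots> \<le> (\<Sum>S\<in>PiE {..<r} (\<lambda>_. UNIV). (\<Prod>i<r. if S i then 1 else 2::real))"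
  proof (rule sum_mono)
    fix S :: "nat \<Rightarrow> bool"
    have p0: "0 \<le> (\<Prod>i<r. \<Sum>k\<in>K i. (\<phi> i (S i) k)\<^sup>2)" by (intro prod_nonneg sum_nonneg) auto
    have "(\<Prod>i<r. \<Sum>k\<in>K i. (\<phi> i (S i) k)\<^sup>2) \<le> (\<Prod>i<r. if S i then 1 else 2::real)"
      by (intro prod_mono conjI sum_nonneg) (auto simp: ph)
    moreover have "(\<gamma> S)\<^sup>2 \<le> 1" using g[of S] power_le_one[of "\<bar>\<gamma> S\<bar>" 2] by simp
    ultimately show "(\<gamma> S)\<^sup>2 * (\<Prod>i<r. \<Sum>k\<in>K i. (\<phi> i (S i) k)\<^sup>2) \<le> (\<Prod>i<r. if S i then 1 else 2::real)"
      using p0 mult_right_mono[of "(\<gamma> S)\<^sup>2" 1 "(\<Prod>i<r. \<Sum>k\<in>K i. (\<phi> i (S i) k)\<^sup>2)"] by linarith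
  qed
  also have "\<dots> = 3 ^ r" by (rule sum_T3)
  finally show ?thesis .
qed
lemma of_bool_sq_real: "(of_bool P :: real)\<^sup>2 = of_bool P"
  by (cases P) auto

definition Loc :: "'a set \<Rightarrow> 'b set \<Rightarrow> ('a \<Rightarrow> 'b \<Rightarrow> real) \<Rightarrow> nat option set \<Rightarrow> (bool \<Rightarrow> 'a \<Rightarrow> nat option \<Rightarrow> real) \<Rightarrow> (bool \<Rightarrow> 'b \<Rightarrow> nat option \<Rightarrow> real) \<Rightarrow> bool" where
  "Loc X Y Bm K f g \<longleftrightarrow> finite K \<and>
     (\<forall>x\<in>X. \<forall>y\<in>Y. \<forall>s. (\<Sum>k\<in>K. f s x k * g s y k) = (if s then Bm x y else 1 - Bm x y)) \<and>
     (\<forall>x\<in>X. \<forall>s. (\<Sum>k\<in>K. (f s x k)\<^sup>2) \<le> (if s then 1 else 2)) \<and>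
     (\<forall>y\<in>Y. \<forall>s. (\<Sum>k\<in>K. (g s y k)\<^sup>2) \<le> (if s then 1 else 2))"

lemma blocky_local:
  fixes Bm :: "'a \<Rightarrow> 'b \<Rightarrow> real"
  assumes bl: "blocky X Y Bm" and fX: "finite X"
  shows "\<exists>(K::nat option set) (f :: bool \<Rightarrow> 'a \<Rightarrow> nat option \<Rightarrow> real) (g :: bool \<Rightarrow> 'b \<Rightarrow> nat option \<Rightarrow> real).
     finite K \<and>
     (\<forall>x\<in>X. \<forall>y\<in>Y. \<forall>s. (\<Sum>k\<in>K. f s x k * g s y k) = (if s then Bm x y else 1 - Bm x y)) \<and>
     (\<forall>x\<in>X. \<forall>s. (\<Sum>k\<in>K. (f s x k)\<^sup>2) \<le> (if s then 1 else 2)) \<and>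
     (\<forall>y\<in>Y. \<forall>s. (\<Sum>k\<in>K. (g s y k)\<^sup>2) \<le> (if s then 1 else 2))"
proof -
  obtain I :: "nat set" and Xs :: "nat \<Rightarrow> 'a set" and Ys :: "nat \<Rightarrow> 'b set" where
    sub0: "\<forall>i\<in>I. Xs i \<subseteq> X \<and> Ys i \<subseteq> Y" and
    dis0: "\<forall>i\<in>I. \<forall>j\<in>I. i \<noteq> j \<longrightarrow> Xs i \<inter> Xs j = {} \<and> Ys i \<inter> Ys j = {}" and
    supp: "{(x, y). x \<in> X \<and> y \<in> Y \<and> Bm x y = 1} = (\<Union>i\<in>I. Xs i \<times> Ys i)"
    using bl unfolding blocky_def by (elim conjE exE) (rule that; assumption)
  have sub: "\<And>i. i\<in>I \<Longrightarrow> Xs i \<subseteq> X \<and> Ys i \<subseteq> Y" using sub0 by blast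
  have dis: "\<And>i j. i\<in>I \<Longrightarrow> j\<in>I \<Longrightarrow> i \<noteq> j \<Longrightarrow> Xs i \<inter> Xs j = {} \<and> Ys i \<inter> Ys j = {}"
    using dis0 by blast
  have bm: "boolean_matrix X Y Bm" using bl by (simp add: blocky_def)
  have bool: "\<And>x y. x \<in> X \<Longrightarrow> y \<in> Y \<Longrightarrow> Bm x y = 0 \<or> Bm x y = 1"
    using bm unfolding boolean_matrix_def by blast
  define J where "J = {j\<in>I. Xs j \<noteq> {}}"
  have "inj_on (\<lambda>j. SOME x. x \<in> Xs j) J"
  proof (rule inj_onI)
    fix i j assume ij: "i \<in> J" "j \<in> J" "(SOME x. x \<in> Xs i) = (SOME x. x \<in> Xs j)"
    have "(SOME x. x \<in> Xs i) \<in> Xs i" using ij(1) unfolding J_def by (simp add: some_in_eq)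
    moreover have "(SOME x. x \<in> Xs j) \<in> Xs j" using ij(2) unfolding J_def by (simp add: some_in_eq)
    ultimately show "i = j" using dis[of i j] ij unfolding J_def by auto
  qed
  moreover have "(\<lambda>j. SOME x. x \<in> Xs j) ` J \<subseteq> X"
  proof (rule image_subsetI)
    fix j assume "j \<in> J"
    then have j: "j \<in> I" "Xs j \<noteq> {}" unfolding J_def by auto
    then have "(SOME x. x \<in> Xs j) \<in> Xs j" by (simp add: some_in_eq)
    then show "(SOME x. x \<in> Xs j) \<in> X" using sub[OF j(1)] by blast
  qed
  ultimately have fJ: "finite J" using fX inj_on_finite by blast
  define K where "K = insert None (Some ` J)"
  define f :: "bool \<Rightarrow> 'a \<Rightarrow> nat option \<Rightarrow> real" where "f s x k = (case k of None \<Rightarrow> (if s then 0 else 1) | Some j \<Rightarrow> of_bool (x \<in> Xs j))"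
    for s :: bool and x :: 'a and k :: "nat option"
  define g :: "bool \<Rightarrow> 'b \<Rightarrow> nat option \<Rightarrow> real" where "g s y k = (case k of None \<Rightarrow> (if s then 0 else 1) | Some j \<Rightarrow> (if s then 1 else -1) * of_bool (y \<in> Ys j))"
    for s :: bool and y :: 'b and k :: "nat option"
  have sK: "(\<Sum>k\<in>K. h k) = h None + (\<Sum>j\<in>J. h (Some j))" for h :: "nat option \<Rightarrow> real"
    unfolding K_def using fJ by (simp add: sum.reindex)
  have c2: "(\<Sum>j\<in>J. of_bool (x \<in> Xs j)) \<le> (1::real)" if "x \<in> X" for x
  proof -
    have "card (J \<inter> {j. x \<in> Xs j}) \<le> Suc 0"
      using fJ dis unfolding J_def by (subst card_le_Suc0_iff_eq) auto
    then show ?thesis using fJ by simp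
  qed
  have c3: "(\<Sum>j\<in>J. of_bool (y \<in> Ys j)) \<le> (1::real)" if "y \<in> Y" for y
  proof -
    have "card (J \<inter> {j. y \<in> Ys j}) \<le> Suc 0"
      using fJ dis unfolding J_def by (subst card_le_Suc0_iff_eq) auto
    then show ?thesis using fJ by simp
  qed
  have c1: "(\<Sum>j\<in>J. of_bool (x \<in> Xs j) * of_bool (y \<in> Ys j)) = Bm x y" if xy: "x \<in> X" "y \<in> Y" for x y
  proof (cases "Bm x y = 1")
    case True
    then have "(x, y) \<in> (\<Union>i\<in>I. Xs i \<times> Ys i)" using supp xy by blast
    then obtain j0 where j0: "j0 \<in> I" "x \<in> Xs j0" "y \<in> Ys j0" by blast
    have "J \<inter> {j. x \<in> Xs j \<and> y \<in> Ys j} = {j0}"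
      using j0 dis unfolding J_def by auto
    then have "(\<Sum>j\<in>J. of_bool (x \<in> Xs j \<and> y \<in> Ys j)) = (1::real)" using fJ by simp
    then show ?thesis using True unfolding of_bool_conj[symmetric] by simp
  next
    case False
    have "J \<inter> {j. x \<in> Xs j \<and> y \<in> Ys j} = {}"
    proof -
      { fix j assume "j \<in> J" "x \<in> Xs j" "y \<in> Ys j"
        then have "(x, y) \<in> (\<Union>i\<in>I. Xs i \<times> Ys i)" unfolding J_def by blast
        then have "Bm x y = 1" using supp by blast }
      then show ?thesis using False by blast
    qed
    then have "(\<Sum>j\<in>J. of_bool (x \<in> Xs j \<and> y \<in> Ys j)) = (0::real)" using fJ by simp
    then show ?thesis using False bool[OF xy] unfolding of_bool_conj[symmetric] by simp
  qed
  show ?thesis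
  proof (intro exI conjI ballI allI)
    show "finite K" unfolding K_def using fJ by simp
    fix s
    { fix x y assume xy: "x \<in> X" "y \<in> Y"
      have "(\<Sum>k\<in>K. f s x k * g s y k) = (if s then 0 else 1) + (if s then 1 else -1) * (\<Sum>j\<in>J. of_bool (x \<in> Xs j) * of_bool (y \<in> Ys j))"
        unfolding sK f_def g_def by (simp add: sum_distrib_left algebra_simps)
      then show "(\<Sum>k\<in>K. f s x k * g s y k) = (if s then Bm x y else 1 - Bm x y)"
        using c1[OF xy] by simp }
    { fix x assume x: "x \<in> X"
      have "(\<Sum>k\<in>K. (f s x k)\<^sup>2) = (if s then 0 else 1) + (\<Sum>j\<in>J. of_bool (x \<in> Xs j))"
        unfolding sK f_def by (simp add: of_bool_sq_real)
      then show "(\<Sum>k\<in>K. (f s x k)\<^sup>2) \<le> (if s then 1 else 2)" using c2[OF x] by simp }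
    { fix y assume y: "y \<in> Y"
      have "(\<Sum>k\<in>K. (g s y k)\<^sup>2) = (if s then 0 else 1) + (\<Sum>j\<in>J. of_bool (y \<in> Ys j))"
        unfolding sK g_def by (simp add: power_mult_distrib of_bool_sq_real)
      then show "(\<Sum>k\<in>K. (g s y k)\<^sup>2) \<le> (if s then 1 else 2)" using c3[OF y] by simp }
  qed
qed
theorem proposition3p5:
  fixes X :: "'a set" and Y :: "'b set" and r :: nat
    and B :: "nat \<Rightarrow> 'a \<Rightarrow> 'b \<Rightarrow> real" and \<Gamma> :: "bool list \<Rightarrow> bool"
    and F :: "'a \<Rightarrow> 'b \<Rightarrow> real"
  assumes "finite X" and "finite Y"
    and "\<And>i. i < r \<Longrightarrow> blocky X Y (B i)"
    and "\<And>x y. x \<in> X \<Longrightarrow> y \<in> Y \<Longrightarrow> F x y = of_bool (\<Gamma> (map (\<lambda>i. B i x y = 1) [0..<r]))"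
  shows "gamma2 X Y F \<le> 3 ^ r"
proof -
  have ex: "\<forall>i. \<exists>t. i < r \<longrightarrow> Loc X Y (B i) (fst t) (fst (snd t)) (snd (snd t))"
  proof
    fix i
    show "\<exists>t. i < r \<longrightarrow> Loc X Y (B i) (fst t) (fst (snd t)) (snd (snd t))"
    proof (cases "i < r")
      case True
      then obtain K f g where "Loc X Y (B i) K f g"
        using blocky_local[OF assms(3)[OF True] assms(1)] unfolding Loc_def by blast
      then show ?thesis by (intro exI[of _ "(K, f, g)"]) simp
    qed simp
  qed
  obtain t where t: "\<forall>i. i < r \<longrightarrow> Loc X Y (B i) (fst (t i)) (fst (snd (t i))) (snd (snd (t i)))"
    using choice[OF ex] by blast
  define KK where "KK i = fst (t i)" for i
  define ff where "ff i = fst (snd (t i))" for i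
  define gg where "gg i = snd (snd (t i))" for i
  have HL: "\<forall>i. i < r \<longrightarrow> Loc X Y (B i) (KK i) (ff i) (gg i)"
    using t unfolding KK_def ff_def gg_def .
  have H: "\<And>i. i < r \<Longrightarrow> finite (KK i) \<and>
     (\<forall>x\<in>X. \<forall>y\<in>Y. \<forall>s. (\<Sum>k\<in>KK i. ff i s x k * gg i s y k) = (if s then B i x y else 1 - B i x y)) \<and>
     (\<forall>x\<in>X. \<forall>s. (\<Sum>k\<in>KK i. (ff i s x k)\<^sup>2) \<le> (if s then 1 else 2)) \<and>
     (\<forall>y\<in>Y. \<forall>s. (\<Sum>k\<in>KK i. (gg i s y k)\<^sup>2) \<le> (if s then 1 else 2))"
    using HL unfolding Loc_def by blast
  have fK: "\<And>i. i < r \<Longrightarrow> finite (KK i)" using H by blast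
  define T where "T = PiE {..<r} (\<lambda>_. UNIV::bool set)"
  define W where "W = PiE {..<r} KK"
  define \<gamma> where "\<gamma> S = (of_bool (\<Gamma> (map S [0..<r])) :: real)" for S :: "nat \<Rightarrow> bool"
  define U where "U x p = \<gamma> (fst p) * (\<Prod>i<r. ff i (fst p i) x (snd p i))" for x p
  define V where "V y p = (\<lambda>_. 1::real) (fst p) * (\<Prod>i<r. gg i (fst p i) y (snd p i))" for y p
  have fin: "finite (T \<times> W)" unfolding T_def W_def using fK by (auto intro!: finite_PiE)
  show ?thesis
  proof (rule gamma2_le[where K="T \<times> W" and u=U and v=V and X=X and Y=Y and A=F, OF fin])
    show "0 \<le> (3::real) ^ r" by simp
    fix x y assume x: "x \<in> X" and y: "y \<in> Y"
    have nU: "(\<Sum>p\<in>T \<times> W. (U x p)\<^sup>2) \<le> 3 ^ r"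
      unfolding U_def T_def W_def
    proof (rule norm_bound[where K=KK and r=r and \<gamma>=\<gamma> and \<phi>="\<lambda>i s k. ff i s x k", OF fK])
      show "\<And>S. \<bar>\<gamma> S\<bar> \<le> 1" by (simp add: \<gamma>_def)
      fix i s assume i: "i < r"
      have "\<forall>x\<in>X. \<forall>s. (\<Sum>k\<in>KK i. (ff i s x k)\<^sup>2) \<le> (if s then 1 else 2)"
        using conjunct1[OF conjunct2[OF conjunct2[OF H[OF i]]]] .
      then show "(\<Sum>k\<in>KK i. (ff i s x k)\<^sup>2) \<le> (if s then 1 else 2)" using x by blast
    qed
    have nV: "(\<Sum>p\<in>T \<times> W. (V y p)\<^sup>2) \<le> 3 ^ r"
      unfolding V_def T_def W_def
    proof (rule norm_bound[where K=KK and r=r and \<gamma>="\<lambda>_. 1" and \<phi>="\<lambda>i s k. gg i s y k", OF fK])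
      show "\<And>S. \<bar>1::real\<bar> \<le> 1" by simp
      fix i s assume i: "i < r"
      have "\<forall>y\<in>Y. \<forall>s. (\<Sum>k\<in>KK i. (gg i s y k)\<^sup>2) \<le> (if s then 1 else 2)"
        using conjunct2[OF conjunct2[OF conjunct2[OF H[OF i]]]] .
      then show "(\<Sum>k\<in>KK i. (gg i s y k)\<^sup>2) \<le> (if s then 1 else 2)" using y by blast
    qed
    have "sqrt (\<Sum>p\<in>T \<times> W. (U x p)\<^sup>2) * sqrt (\<Sum>p\<in>T \<times> W. (V y p)\<^sup>2) \<le> sqrt (3 ^ r) * sqrt (3 ^ r)"
      using nU nV by (intro mult_mono) (auto intro!: sum_nonneg)
    also have "\<dots> = 3 ^ r" by simp
    finally have nn: "sqrt (\<Sum>p\<in>T \<times> W. (U x p)\<^sup>2) * sqrt (\<Sum>p\<in>T \<times> W. (V y p)\<^sup>2) \<le> 3 ^ r" .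
    have "(\<Sum>p\<in>T \<times> W. U x p * V y p) = (\<Sum>p\<in>T \<times> W. \<gamma> (fst p) * (\<Prod>i<r. (\<lambda>i s k. ff i s x k * gg i s y k) i (fst p i) (snd p i)))"
      unfolding U_def V_def by (simp add: prod.distrib mult.assoc)
    also have "\<dots> = (\<Sum>S\<in>T. \<gamma> S * (\<Prod>i<r. \<Sum>k\<in>KK i. ff i (S i) x k * gg i (S i) y k))"
      unfolding T_def W_def by (rule sum_TW[where K=KK and r=r and \<gamma>=\<gamma> and ch="\<lambda>i s k. ff i s x k * gg i s y k", OF fK])
    also have "\<dots> = (\<Sum>S\<in>T. \<gamma> S * (\<Prod>i<r. if S i then B i x y else 1 - B i x y))"
    proof (rule sum.cong[OF refl])
      fix S :: "nat \<Rightarrow> bool"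
      have "(\<Prod>i<r. \<Sum>k\<in>KK i. ff i (S i) x k * gg i (S i) y k) = (\<Prod>i<r. if S i then B i x y else 1 - B i x y)"
      proof (rule prod.cong[OF refl])
        fix i assume "i \<in> {..<r}"
        then have "\<forall>x\<in>X. \<forall>y\<in>Y. \<forall>s. (\<Sum>k\<in>KK i. ff i s x k * gg i s y k) = (if s then B i x y else 1 - B i x y)"
          using H[of i] by simp
        then show "(\<Sum>k\<in>KK i. ff i (S i) x k * gg i (S i) y k) = (if S i then B i x y else 1 - B i x y)"
          using x y by blast
      qed
      then show "\<gamma> S * (\<Prod>i<r. \<Sum>k\<in>KK i. ff i (S i) x k * gg i (S i) y k) = \<gamma> S * (\<Prod>i<r. if S i then B i x y else 1 - B i x y)"
        by simp
    qed
    also have "\<dots> = F x y"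
    proof -
      define p0 where "p0 = restrict (\<lambda>i. B i x y = 1) {..<r}"
      have bool: "\<And>i. i < r \<Longrightarrow> B i x y = 0 \<or> B i x y = 1"
      proof -
        fix i assume "i < r"
        then have "boolean_matrix X Y (B i)" using assms(3) by (simp add: blocky_def)
        then show "B i x y = 0 \<or> B i x y = 1" using x y unfolding boolean_matrix_def by blast
      qed
      have p0T: "p0 \<in> T" unfolding p0_def T_def by auto
      have fT: "finite T" unfolding T_def by (auto intro!: finite_PiE)
      have z: "(\<Sum>S\<in>T - {p0}. \<gamma> S * (\<Prod>i<r. if S i then B i x y else 1 - B i x y)) = 0"
      proof (rule sum.neutral, rule ballI)
        fix S assume S: "S \<in> T - {p0}"
        have "\<exists>i<r. S i \<noteq> p0 i"
        proof (rule ccontr)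
          assume "\<not> ?thesis"
          then have "S = p0" using S p0T unfolding T_def by (intro PiE_ext[of S "{..<r}" "\<lambda>_. UNIV"]) auto
          then show False using S by blast
        qed
        then obtain i where i: "i < r" "S i \<noteq> p0 i" by blast
        have "(if S i then B i x y else 1 - B i x y) = 0"
          using i bool[OF i(1)] unfolding p0_def by auto
        then have "(\<Prod>i<r. if S i then B i x y else 1 - B i x y) = 0"
          using i(1) by (intro prod_zero) (auto intro!: bexI[of _ i])
        then show "\<gamma> S * (\<Prod>i<r. if S i then B i x y else 1 - B i x y) = 0" by simp
      qed
      have pr1: "(\<Prod>i<r. if p0 i then B i x y else 1 - B i x y) = 1"
        by (rule prod.neutral) (use bool in \<open>auto simp: p0_def\<close>)
      have gp0: "\<gamma> p0 = F x y"
      proof -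
        have "map p0 [0..<r] = map (\<lambda>i. B i x y = 1) [0..<r]"
          by (rule map_cong) (auto simp: p0_def)
        then show ?thesis unfolding \<gamma>_def assms(4)[OF x y] by (simp only:)
      qed
      have "(\<Sum>S\<in>T. \<gamma> S * (\<Prod>i<r. if S i then B i x y else 1 - B i x y))
          = \<gamma> p0 * (\<Prod>i<r. if p0 i then B i x y else 1 - B i x y) + (\<Sum>S\<in>T - {p0}. \<gamma> S * (\<Prod>i<r. if S i then B i x y else 1 - B i x y))"
        by (rule sum.remove[OF fT p0T])
      also have "\<dots> = F x y" by (simp only: z pr1 gp0 add_0_right mult_1_right)
      finally show ?thesis .
    qed
    finally have e: "(\<Sum>p\<in>T \<times> W. U x p * V y p) = F x y" .
    show "(\<Sum>p\<in>T \<times> W. U x p * V y p) = F x y \<and>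
      sqrt (\<Sum>p\<in>T \<times> W. (U x p)\<^sup>2) * sqrt (\<Sum>p\<in>T \<times> W. (V y p)\<^sup>2) \<le> 3 ^ r"
      using e nn by (rule conjI)
  qed
qed

end
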